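(* Assume the continuum hypothesis. Let $(\mathbb{R},\mathcal{C})$ be a category base such that: (a) it is point-meager; (b) it satisfies the countable chain condition; (c) $\mathcal{C}$ is linearly invariant; (d) $\operatorname{card}(\mathcal{C})\le 2^{\aleph_0}$; and (e) $\mathbb{R}$ is abundant in $(\mathbb{R},\mathcal{C})$. Then there exist sets $E,F\subseteq\mathbb{R}$ such that (i) both $E$ and $F$ are rare sets in the category base $(\mathbb{R},\mathcal{C})$; (ii) both $E$ and $F$ are vector spaces over the field $\mathbb{Q}$ of rational numbers (i.e. $\mathbb{Q}$-linear subspaces of $\mathbb{R}$); (iii) $\mathbb{R}=E+F=\{e+f:e\in E,\ f\in F\}$ and $E\cap F=\{0\}$.
   Context: A category base is a pair $(X,\mathcal{C})$ with $X$ a nonempty set and $\mathcal{C}$ a family of subsets of $X$ whose nonempty members (called regions) satisfy: (1) $X=\bigcup\mathcal{C}$; (2) for every region $A$ and every nonempty family $\mathcal{D}$ of pairwise disjoint regions with $\operatorname{card}(\mathcal{D})<\operatorname{card}(\mathcal{C})$: (i) if $A\cap\bigcup\mathcal{D}$ contains a region, then there is $D\in\mathcal{D}$ such that $A\cap D$ contains a region; (ii) if $A\cap\bigcup\mathcal{D}$ contains no region, then there is a region $B\subseteq A$ disjoint from every region in $\mathcal{D}$. A set $S\subseteq X$ is singular if every region contains a subregion disjoint from $S$; a set is meager if it is a countable union of singular sets, and abundant otherwise. The base is point-meager if every singleton is meager. It satisfies the countable chain condition (c.c.c.) if every family of pairwise disjoint regions is at most countable. For $X=\mathbb{R}$, $\mathcal{C}$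 is linearly invariant if for every $E\in\mathcal{C}$, every $r\in\mathbb{R}$ and every nonzero $\lambda\in\mathbb{R}$, the sets $E+r=\{x+r:x\in E\}$ and $\lambda E=\{\lambda x:x\in E\}$ belong to $\mathcal{C}$. A set $R\subseteq X$ is a rare set in $(X,\mathcal{C})$ if $R$ is uncountable and $R\cap M$ is countable for every meager set $M$ of $(X,\mathcal{C})$. *)

theory Defs
  imports "HOL-Analysis.Analysis" "HOL-Library.Equipollence"
begin

definition region :: "'a set set \<Rightarrow> 'a set \<Rightarrow> bool" where
  "region C A \<longleftrightarrow> A \<in> C \<and> A \<noteq> {}"

definition category_base :: "'a set \<Rightarrow> 'a set set \<Rightarrow> bool" where
  "category_base X C \<longleftrightarrow>
     X \<noteq> {} \<and> C \<subseteq> Pow X \<and> X = \<Union>C \<and>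
     (\<forall>A D. region C A \<and> D \<noteq> {} \<and> (\<forall>B\<in>D. region C B) \<and>
            pairwise disjnt D \<and> D \<prec> C \<longrightarrow>
        ((\<exists>B. region C B \<and> B \<subseteq> A \<inter> \<Union>D) \<longrightarrow>
            (\<exists>E\<in>D. \<exists>B. region C B \<and> B \<subseteq> A \<inter> E)) \<and>
        (\<not>(\<exists>B. region C B \<and> B \<subseteq> A \<inter> \<Union>D) \<longrightarrow>
            (\<exists>B. region C B \<and> B \<subseteq> A \<and> (\<forall>E\<in>D. B \<inter> E = {}))))"

definition singular :: "'a set set \<Rightarrow> 'a set \<Rightarrow> bool" where
  "singular C S \<longleftrightarrow> (\<forall>A. region C A \<longrightarrow> (\<exists>B. region C B \<and> B \<subseteq> A \<and> B \<inter> S = {}))"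

definition meager :: "'a set set \<Rightarrow> 'a set \<Rightarrow> bool" where
  "meager C M \<longleftrightarrow> (\<exists>F. countable F \<and> (\<forall>S\<in>F. singular C S) \<and> M = \<Union>F)"

definition abundant :: "'a set set \<Rightarrow> 'a set \<Rightarrow> bool" where
  "abundant C S \<longleftrightarrow> \<not> meager C S"

definition point_meager :: "'a set \<Rightarrow> 'a set set \<Rightarrow> bool" where
  "point_meager X C \<longleftrightarrow> (\<forall>x\<in>X. meager C {x})"

definition ccc :: "'a set set \<Rightarrow> bool" where
  "ccc C \<longleftrightarrow> (\<forall>D. (\<forall>B\<in>D. region C B) \<and> pairwise disjnt D \<longrightarrow> countable D)"

definition linearly_invariant :: "real set set \<Rightarrow> bool" where
  "linearly_invariant C \<longleftrightarrow>
     (\<forall>E\<in>C. \<forall>r::real. (\<lambda>x. x + r) ` E \<in> C \<and> (r \<noteq> 0 \<longrightarrow> (\<lambda>x. r * x) ` E \<in> C))"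

definition rare_set :: "'a set \<Rightarrow> 'a set set \<Rightarrow> 'a set \<Rightarrow> bool" where
  "rare_set X C R \<longleftrightarrow> R \<subseteq> X \<and> uncountable R \<and> (\<forall>M. meager C M \<longrightarrow> countable (R \<inter> M))"

definition Q_subspace :: "real set \<Rightarrow> bool" where
  "Q_subspace E \<longleftrightarrow> 0 \<in> E \<and> (\<forall>x\<in>E. \<forall>y\<in>E. x + y \<in> E) \<and> (\<forall>q\<in>\<rat>. \<forall>x\<in>E. q * x \<in> E)"

definition CH :: bool where
  "CH \<longleftrightarrow> (\<forall>A :: real set. countable A \<or> A \<approx> (UNIV :: real set))"

end

theory Submission
  imports Defs
begin


definition sumset :: "real set \<Rightarrow> real set \<Rightarrow> real set" where
  "sumset E F = {e + f | e f. e \<in> E \<and> f \<in> F}"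

lemma step0:
  fixes N :: "real set \<Rightarrow> bool"
  assumes N_Un: "\<And>F. countable F \<Longrightarrow> (\<forall>S\<in>F. N S) \<Longrightarrow> N (\<Union>F)"
    and N_count: "\<And>A. countable A \<Longrightarrow> N A"
    and N_aff: "\<And>M c d. N M \<Longrightarrow> c \<noteq> 0 \<Longrightarrow> N {a. c*a + d \<in> M}"
    and N_UNIV: "\<not> N UNIV"
    and E0: "Q_subspace E0" "countable E0" and F0: "Q_subspace F0" "countable F0"
    and EF0: "E0 \<inter> F0 = {0}" and NM: "N M"
    and xV: "x \<notin> sumset E0 F0"
  shows "\<exists>E1 F1. Q_subspace E1 \<and> Q_subspace F1 \<and> countable E1 \<and> countable F1 \<and>
     E0 \<subseteq> E1 \<and> F0 \<subseteq> F1 \<and> E1 \<noteq> E0 \<and> F1 \<noteq> F0 \<and> E1 \<inter> F1 = {0} \<and>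
     x \<in> sumset E1 F1 \<and> (E1 - E0) \<inter> M = {} \<and> (F1 - F0) \<inter> M = {}"
proof -
  define W where "W = {e + f + q*x | e f q. e \<in> E0 \<and> f \<in> F0 \<and> q \<in> \<rat>}"
  have cW: "countable W"
  proof -
    have "W = (\<lambda>(e,f,q). e + f + q*x) ` (E0 \<times> F0 \<times> \<rat>)" unfolding W_def by (auto simp: image_iff) blast
    thus ?thesis using E0 F0 countable_rat by (metis countable_image countable_SIGMA)
  qed
  define A where "A = W \<union> (\<Union>p\<in>(\<rat> - {0}) \<times> W. {a. fst p * a + snd p \<in> M})"
  have "N A" unfolding A_def
  proof -
    have "N (\<Union>p\<in>(\<rat> - {0}) \<times> W. {a. fst p * a + snd p \<in> M})"
      by (rule N_Un) (use cW countable_rat N_aff NM in \<open>auto intro!: countable_image countable_SIGMA\<close>)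
    moreover have "N W" using cW N_count by blast
    ultimately show "N (W \<union> (\<Union>p\<in>(\<rat> - {0}) \<times> W. {a. fst p * a + snd p \<in> M}))"
      using N_Un[of "{W, (\<Union>p\<in>(\<rat> - {0}) \<times> W. {a. fst p * a + snd p \<in> M})}"]
        by simp
  qed
  then obtain a where aA: "a \<notin> A" using N_UNIV by (metis UNIV_eq_I)
  have aW: "a \<notin> W" using aA A_def by auto
  have aM: "q * a + w \<notin> M" if "q \<in> \<rat>" "q \<noteq> 0" "w \<in> W" for q w
    using aA that unfolding A_def by auto
  have E0m: "-e \<in> E0" if "e \<in> E0" for e using E0(1) that unfolding Q_subspace_def
    by (metis Rats_minus_iff Rats_1 mult_minus1)
  have E0s: "q * e \<in> E0" if "q \<in> \<rat>" "e \<in> E0" for q e using E0(1) that unfolding Q_subspace_def by blast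
  have F0s: "q * e \<in> F0" if "q \<in> \<rat>" "e \<in> F0" for q e using F0(1) that unfolding Q_subspace_def by blast
  have F0m: "-e \<in> F0" if "e \<in> F0" for e using F0s[of "-1" e] that by simp
  have E00: "0 \<in> E0" and F00: "0 \<in> F0" using E0 F0 unfolding Q_subspace_def by auto
  define E1 where "E1 = {e + q*a | e q. e \<in> E0 \<and> q \<in> \<rat>}"
  define F1 where "F1 = {f + q*(x - a) | f q. f \<in> F0 \<and> q \<in> \<rat>}"
  have "Q_subspace E1"
    unfolding Q_subspace_def
  proof (intro conjI ballI)
    show "0 \<in> E1" unfolding E1_def using E00 by force
  next
    fix y z assume "y \<in> E1" "z \<in> E1"
    then obtain e1 q1 e2 q2 where "y = e1 + q1*a" "z = e2 + q2*a" "e1 \<in> E0" "e2 \<in> E0" "q1 \<in> \<rat>" "q2 \<in> \<rat>"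
      unfolding E1_def by blast
    moreover have "e1 + e2 \<in> E0" using E0(1) \<open>e1 \<in> E0\<close> \<open>e2 \<in> E0\<close> unfolding Q_subspace_def by blast
    moreover have "q1 + q2 \<in> \<rat>" using calculation by simp
    moreover have "y + z = (e1+e2) + (q1+q2)*a" using calculation by (simp add: algebra_simps)
    ultimately show "y + z \<in> E1" unfolding E1_def by blast
  next
    fix r :: real and y assume "r \<in> \<rat>" "y \<in> E1"
    then obtain e q where "y = e + q*a" "e \<in> E0" "q \<in> \<rat>" unfolding E1_def by blast
    moreover have "r*e \<in> E0" "r*q \<in> \<rat>" using calculation E0s \<open>r \<in> \<rat>\<close> by auto
    moreover have "r*y = r*e + (r*q)*a" unfolding calculation(1) by (simp add: algebra_simps)
    ultimately show "r * y \<in> E1" unfolding E1_def by blast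
  qed
  moreover have "Q_subspace F1"
    unfolding Q_subspace_def
  proof (intro conjI ballI)
    show "0 \<in> F1" unfolding F1_def using F00 by force
  next
    fix y z assume "y \<in> F1" "z \<in> F1"
    then obtain e1 q1 e2 q2 where "y = e1 + q1*(x-a)" "z = e2 + q2*(x-a)" "e1 \<in> F0" "e2 \<in> F0" "q1 \<in> \<rat>" "q2 \<in> \<rat>"
      unfolding F1_def by blast
    moreover have "e1 + e2 \<in> F0" using F0(1) \<open>e1 \<in> F0\<close> \<open>e2 \<in> F0\<close> unfolding Q_subspace_def by blast
    moreover have "q1 + q2 \<in> \<rat>" using calculation by simp
    moreover have "y + z = (e1+e2) + (q1+q2)*(x-a)" using calculation by (simp add: algebra_simps)
    ultimately show "y + z \<in> F1" unfolding F1_def by blast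
  next
    fix r :: real and y assume "r \<in> \<rat>" "y \<in> F1"
    then obtain e q where "y = e + q*(x-a)" "e \<in> F0" "q \<in> \<rat>" unfolding F1_def by blast
    moreover have "r*e \<in> F0" "r*q \<in> \<rat>" using calculation F0s \<open>r \<in> \<rat>\<close> by auto
    moreover have "r*y = r*e + (r*q)*(x-a)" unfolding calculation(1) by (simp add: algebra_simps)
    ultimately show "r * y \<in> F1" unfolding F1_def by blast
  qed
  moreover have "countable E1"
  proof -
    have "E1 = (\<lambda>(e,q). e + q*a) ` (E0 \<times> \<rat>)" unfolding E1_def by (auto simp: image_iff)
    thus ?thesis using E0 countable_rat by (metis countable_image countable_SIGMA)
  qed
  moreover have "countable F1"
  proof -
    have "F1 = (\<lambda>(e,q). e + q*(x-a)) ` (F0 \<times> \<rat>)" unfolding F1_def by (auto simp: image_iff)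
    thus ?thesis using F0 countable_rat by (metis countable_image countable_SIGMA)
  qed
  moreover have sE: "E0 \<subseteq> E1" unfolding E1_def by (force)
  moreover have sF: "F0 \<subseteq> F1" unfolding F1_def by (force)
  moreover have "a \<in> E1" proof - have "a = 0 + 1*a" by simp thus ?thesis unfolding E1_def using E00 Rats_1 by blast qed
  moreover have "a \<notin> E0"
  proof
    assume "a \<in> E0"
    hence "a \<in> W" proof - have "a = a + 0 + 0*x" by simp thus ?thesis unfolding W_def using F00 Rats_0 \<open>a \<in> E0\<close> by blast qed
    with aW show False by simp
  qed
  moreover have "x - a \<in> F1" proof - have "x - a = 0 + 1*(x-a)" by simp thus ?thesis unfolding F1_def using F00 Rats_1 by blast qed
  moreover have "x - a \<notin> F0"
  proof
    assume "x - a \<in> F0"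
    hence "a \<in> W" proof - have "a = 0 + (-(x-a)) + 1*x" by simp thus ?thesis unfolding W_def using E00 F0m Rats_1 \<open>x - a \<in> F0\<close> by blast qed
    with aW show False by simp
  qed
  moreover have "x \<in> sumset E1 F1"
    unfolding sumset_def using \<open>a \<in> E1\<close> \<open>x - a \<in> F1\<close> by force
  moreover have "(E1 - E0) \<inter> M = {}"
  proof -
    { fix y assume "y \<in> E1" "y \<notin> E0" "y \<in> M"
      then obtain e q where y: "y = e + q*a" "e \<in> E0" "q \<in> \<rat>" unfolding E1_def by blast
      have "q \<noteq> 0" using y \<open>y \<notin> E0\<close> by auto
      moreover have "e \<in> W" proof - have "e = e + 0 + 0*x" by simp thus ?thesis unfolding W_def using y F00 Rats_0 by blast qed
      ultimately have "q * a + e \<notin> M" using aM y by blast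
      with \<open>y \<in> M\<close> y have False by (simp add: add.commute) }
    thus ?thesis by blast
  qed
  moreover have "(F1 - F0) \<inter> M = {}"
  proof -
    { fix y assume "y \<in> F1" "y \<notin> F0" "y \<in> M"
      then obtain f q where y: "y = f + q*(x-a)" "f \<in> F0" "q \<in> \<rat>" unfolding F1_def by blast
      have "q \<noteq> 0" using y \<open>y \<notin> F0\<close> by auto
      moreover have "0 + f + q*x \<in> W" unfolding W_def using y E00 by blast
      ultimately have "(-q) * a + (0 + f + q*x) \<notin> M" using aM[of "-q" "0 + f + q*x"] y by simp
      moreover have "(-q) * a + (0 + f + q*x) = y" using y by (simp add: algebra_simps)
      ultimately have False using \<open>y \<in> M\<close> by simp }
    thus ?thesis by blast
  qed
  moreover have "E1 \<inter> F1 = {0}"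
  proof -
    { fix y assume "y \<in> E1" "y \<in> F1"
      then obtain e p f q where y: "y = e + p*a" "e \<in> E0" "p \<in> \<rat>" "y = f + q*(x-a)" "f \<in> F0" "q \<in> \<rat>"
        unfolding E1_def F1_def by blast
      have "p + q = 0"
      proof (rule ccontr)
        assume h: "p + q \<noteq> 0"
        have pa: "(p+q)*a = f - e + q*x" using y by (simp add: algebra_simps)
        have "a = ((p+q)*a)/(p+q)" using h by simp
        also have "\<dots> = (f - e + q*x)/(p+q)" using pa by simp
        also have "\<dots> = (-(1/(p+q))) * e + (1/(p+q)) * f + (q/(p+q)) * x"
          by (simp add: add_divide_distrib diff_divide_distrib)
        finally have "a = (-(1/(p+q))) * e + (1/(p+q)) * f + (q/(p+q)) * x" .
        moreover have "(-(1/(p+q))) * e \<in> E0" using E0s[of "-(1/(p+q))" e] y by simp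
        moreover have "(1/(p+q)) * f \<in> F0" using F0s[of "1/(p+q)" f] y by simp
        moreover have "q/(p+q) \<in> \<rat>" using y by simp
        ultimately have "a \<in> W" unfolding W_def by blast
        with aW show False by simp
      qed
      hence "p = -q" by simp
      hence "e + (-q)*a = f + q*(x-a)" using y by simp
      hence eq: "e = f + q * x" by (simp add: algebra_simps)
      have "q = 0"
      proof (rule ccontr)
        assume "q \<noteq> 0"
        hence "x = (1/q) * e + (1/q) * (-f)" using eq by (simp add: field_simps)
        moreover have "(1/q) * e \<in> E0" "(1/q) * (-f) \<in> F0" using E0s[of "1/q" e] F0s[of "1/q" "-f"] F0m y by auto
        ultimately have "x \<in> sumset E0 F0" unfolding sumset_def by blast
        with xV show False by simp
      qed
      hence "y = 0" using eq y EF0 \<open>p + q = 0\<close> by auto }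
    moreover have "0 \<in> E1" "0 \<in> F1" using sE sF E00 F00 by auto
    ultimately show ?thesis by blast
  qed
  ultimately show ?thesis by blast
qed


lemma step:
  fixes N :: "real set \<Rightarrow> bool"
  assumes N_Un: "\<And>F. countable F \<Longrightarrow> (\<forall>S\<in>F. N S) \<Longrightarrow> N (\<Union>F)"
    and N_count: "\<And>A. countable A \<Longrightarrow> N A"
    and N_aff: "\<And>M c d. N M \<Longrightarrow> c \<noteq> 0 \<Longrightarrow> N {a. c*a + d \<in> M}"
    and N_UNIV: "\<not> N UNIV"
    and E0: "Q_subspace E0" "countable E0" and F0: "Q_subspace F0" "countable F0"
    and EF0: "E0 \<inter> F0 = {0}" and NM: "N M"
  shows "\<exists>E1 F1. Q_subspace E1 \<and> Q_subspace F1 \<and> countable E1 \<and> countable F1 \<and>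
     E0 \<subseteq> E1 \<and> F0 \<subseteq> F1 \<and> E1 \<noteq> E0 \<and> F1 \<noteq> F0 \<and> E1 \<inter> F1 = {0} \<and>
     x \<in> sumset E1 F1 \<and> (E1 - E0) \<inter> M = {} \<and> (F1 - F0) \<inter> M = {}"
proof (cases "x \<in> sumset E0 F0")
  case False
  then show ?thesis using step0[OF assms] by blast
next
  case True
  have "sumset E0 F0 = (\<lambda>(e,f). e + f) ` (E0 \<times> F0)" unfolding sumset_def by (auto simp: image_iff)
  hence "countable (sumset E0 F0)" using E0 F0 by (metis countable_image countable_SIGMA)
  then obtain x' where x': "x' \<notin> sumset E0 F0" using uncountable_UNIV_real by (metis UNIV_eq_I)
  obtain E1 F1 where P: "Q_subspace E1 \<and> Q_subspace F1 \<and> countable E1 \<and> countable F1 \<and>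
     E0 \<subseteq> E1 \<and> F0 \<subseteq> F1 \<and> E1 \<noteq> E0 \<and> F1 \<noteq> F0 \<and> E1 \<inter> F1 = {0} \<and>
     x' \<in> sumset E1 F1 \<and> (E1 - E0) \<inter> M = {} \<and> (F1 - F0) \<inter> M = {}"
    using step0[OF assms x'] by blast
  have "x \<in> sumset E1 F1" using True P unfolding sumset_def by blast
  with P show ?thesis by blast
qed

lemma chain_sub:
  assumes H: "\<forall>i\<in>I. Q_subspace (E i) \<and> Q_subspace (F i) \<and> E i \<inter> F i = {0}"
    and ch: "\<forall>i\<in>I. \<forall>j\<in>I. (E i \<subseteq> E j \<and> F i \<subseteq> F j) \<or> (E j \<subseteq> E i \<and> F j \<subseteq> F i)"
  shows "Q_subspace (insert 0 (\<Union>i\<in>I. E i)) \<and> Q_subspace (insert 0 (\<Union>i\<in>I. F i)) \<and>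
         insert 0 (\<Union>i\<in>I. E i) \<inter> insert 0 (\<Union>i\<in>I. F i) = {0}"
proof (intro conjI)
  show "Q_subspace (insert 0 (\<Union>i\<in>I. E i))"
    unfolding Q_subspace_def
  proof (intro conjI ballI)
    fix x y assume x: "x \<in> insert 0 (\<Union>i\<in>I. E i)" and y: "y \<in> insert 0 (\<Union>i\<in>I. E i)"
    show "x + y \<in> insert 0 (\<Union>i\<in>I. E i)"
    proof (cases "x = 0 \<or> y = 0")
      case True thus ?thesis using x y by auto
    next
      case False
      then obtain i j where "i \<in> I" "j \<in> I" "x \<in> E i" "y \<in> E j" using x y by auto
      hence "(x \<in> E j \<and> y \<in> E j \<and> j \<in> I) \<or> (x \<in> E i \<and> y \<in> E i \<and> i \<in> I)" using ch by blast
      then obtain k where "k \<in> I" "x \<in> E k" "y \<in> E k" by blast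
      hence "x + y \<in> E k" using H unfolding Q_subspace_def by blast
      thus ?thesis using \<open>k \<in> I\<close> by blast
    qed
  next
    fix q :: real and x assume q: "q \<in> \<rat>" and x: "x \<in> insert 0 (\<Union>i\<in>I. E i)"
    show "q * x \<in> insert 0 (\<Union>i\<in>I. E i)"
    proof (cases "x = 0")
      case False
      then obtain i where i: "i \<in> I" "x \<in> E i" using x by auto
      hence "q*x \<in> E i" using H q unfolding Q_subspace_def by blast
      thus ?thesis using i by blast
    qed simp
  qed simp
next
  show "Q_subspace (insert 0 (\<Union>i\<in>I. F i))"
    unfolding Q_subspace_def
  proof (intro conjI ballI)
    fix x y assume x: "x \<in> insert 0 (\<Union>i\<in>I. F i)" and y: "y \<in> insert 0 (\<Union>i\<in>I. F i)"
    show "x + y \<in> insert 0 (\<Union>i\<in>I. F i)"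
    proof (cases "x = 0 \<or> y = 0")
      case True thus ?thesis using x y by auto
    next
      case False
      then obtain i j where "i \<in> I" "j \<in> I" "x \<in> F i" "y \<in> F j" using x y by auto
      hence "(x \<in> F j \<and> y \<in> F j \<and> j \<in> I) \<or> (x \<in> F i \<and> y \<in> F i \<and> i \<in> I)" using ch by blast
      then obtain k where "k \<in> I" "x \<in> F k" "y \<in> F k" by blast
      hence "x + y \<in> F k" using H unfolding Q_subspace_def by blast
      thus ?thesis using \<open>k \<in> I\<close> by blast
    qed
  next
    fix q :: real and x assume q: "q \<in> \<rat>" and x: "x \<in> insert 0 (\<Union>i\<in>I. F i)"
    show "q * x \<in> insert 0 (\<Union>i\<in>I. F i)"
    proof (cases "x = 0")
      case False
      then obtain i where i: "i \<in> I" "x \<in> F i" using x by auto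
      hence "q*x \<in> F i" using H q unfolding Q_subspace_def by blast
      thus ?thesis using i by blast
    qed simp
  qed simp
next
  show "insert 0 (\<Union>i\<in>I. E i) \<inter> insert 0 (\<Union>i\<in>I. F i) = {0}"
  proof (intro equalityI subsetI)
    fix x assume x: "x \<in> insert 0 (\<Union>i\<in>I. E i) \<inter> insert 0 (\<Union>i\<in>I. F i)"
    show "x \<in> {0}"
    proof (cases "x = 0")
      case False
      then obtain i j where "i \<in> I" "j \<in> I" "x \<in> E i" "x \<in> F j" using x by auto
      hence "(x \<in> E j \<and> x \<in> F j \<and> j \<in> I) \<or> (x \<in> E i \<and> x \<in> F i \<and> i \<in> I)" using ch by blast
      then obtain k where "k \<in> I" "x \<in> E k" "x \<in> F k" by blast
      thus ?thesis using H by blast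
    qed simp
  qed simp
qed


lemma construct:
  fixes N :: "real set \<Rightarrow> bool" and W :: "real rel" and Mf :: "real \<Rightarrow> real set"
  assumes N_Un: "\<And>F. countable F \<Longrightarrow> (\<forall>S\<in>F. N S) \<Longrightarrow> N (\<Union>F)"
    and N_count: "\<And>A. countable A \<Longrightarrow> N A"
    and N_aff: "\<And>M c d. N M \<Longrightarrow> c \<noteq> 0 \<Longrightarrow> N {a. c*a + d \<in> M}"
    and N_UNIV: "\<not> N UNIV"
    and wo: "well_order_on UNIV W" and cnt: "\<And>t. countable (underS W t)"
    and NMf: "\<And>t. N (Mf t)" and cof: "\<And>M. N M \<Longrightarrow> \<exists>t. M \<subseteq> Mf t"
  shows "\<exists>E F. uncountable E \<and> uncountable F \<and> (\<forall>M. N M \<longrightarrow> countable (E \<inter> M)) \<and>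
     (\<forall>M. N M \<longrightarrow> countable (F \<inter> M)) \<and> Q_subspace E \<and> Q_subspace F \<and>
     sumset E F = UNIV \<and> E \<inter> F = {0}"
proof -
  define R where "R = W - Id"
  have wfR: "wf R" using wo unfolding well_order_on_def R_def by blast
  have tot: "(s,t) \<in> W \<or> (t,s) \<in> W" if "s \<noteq> t" for s t
    using wo that unfolding well_order_on_def linear_order_on_def partial_order_on_def total_on_def by blast
  define pred where "pred t = underS W t" for t
  have pred_iff: "s \<in> pred t \<longleftrightarrow> (s,t) \<in> R" for s t unfolding pred_def R_def underS_def by auto
  define G where "G t = \<Union>(Mf ` insert t (pred t))" for t
  have NG: "N (G t)" for t
    unfolding G_def by (rule N_Un) (use cnt NMf in \<open>auto simp: pred_def\<close>)
  define P where "P = (\<lambda>E0 F0 M x E1 F1. Q_subspace E1 \<and> Q_subspace F1 \<and> countable E1 \<and> countable F1 \<and>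
     E0 \<subseteq> E1 \<and> F0 \<subseteq> F1 \<and> E1 \<noteq> E0 \<and> F1 \<noteq> F0 \<and> E1 \<inter> F1 = {0} \<and>
     x \<in> sumset E1 F1 \<and> (E1 - E0) \<inter> M = {} \<and> (F1 - F0) \<inter> M = {})"
  define pre where "pre = (\<lambda>E0 F0. Q_subspace E0 \<and> Q_subspace F0 \<and> countable E0 \<and> countable F0 \<and> E0 \<inter> F0 = {0})"
  define stepf where "stepf = (\<lambda>E0 F0 M (x::real). SOME EF. P E0 F0 M x (fst EF) (snd EF))"
  have stepP: "P E0 F0 M x (fst (stepf E0 F0 M x)) (snd (stepf E0 F0 M x))"
    if "pre E0 F0" "N M" for E0 F0 M x
  proof -
    have "\<exists>EF. P E0 F0 M x (fst EF) (snd EF)"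
      using step[OF N_Un N_count N_aff N_UNIV, of E0 F0 M x] that unfolding pre_def P_def by auto
    thus ?thesis unfolding stepf_def by (rule someI_ex)
  qed
  define Hh where "Hh = (\<lambda>f t. stepf (insert 0 (\<Union>s\<in>pred t. fst (f s))) (insert 0 (\<Union>s\<in>pred t. snd (f s))) (G t) t)"
  define st where "st = wfrec R Hh"
  have st_eq: "st t = Hh st t" for t
  proof -
    have "st t = Hh (cut st R t) t" unfolding st_def by (rule wfrec[OF wfR])
    moreover have "\<And>s. s \<in> pred t \<Longrightarrow> cut st R t s = st s" by (simp add: cut_def pred_iff)
    hence "Hh (cut st R t) t = Hh st t" unfolding Hh_def by (simp cong: SUP_cong_simp)
    ultimately show ?thesis by simp
  qed
  define E where "E t = fst (st t)" for t
  define F where "F t = snd (st t)" for t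
  define Ep where "Ep t = insert 0 (\<Union>s\<in>pred t. E s)" for t
  define Fp where "Fp t = insert 0 (\<Union>s\<in>pred t. F s)" for t
  have st_eq2: "st t = stepf (Ep t) (Fp t) (G t) t" for t
    using st_eq[of t] unfolding Hh_def Ep_def Fp_def E_def F_def by simp
  have good: "pre (Ep t) (Fp t) \<and> P (Ep t) (Fp t) (G t) t (E t) (F t)" for t
    using wfR
  proof (induct t rule: wf_induct_rule)
    case (less t)
    have IH: "Q_subspace (E s) \<and> Q_subspace (F s) \<and> countable (E s) \<and> countable (F s) \<and>
        Ep s \<subseteq> E s \<and> Fp s \<subseteq> F s \<and> E s \<inter> F s = {0}" if "s \<in> pred t" for s
    proof -
      have "(s,t) \<in> R" using that pred_iff by simp
      hence "P (Ep s) (Fp s) (G s) s (E s) (F s)" using less by blast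
      thus ?thesis unfolding P_def by blast
    qed
    have ch: "\<forall>i\<in>pred t. \<forall>j\<in>pred t. (E i \<subseteq> E j \<and> F i \<subseteq> F j) \<or> (E j \<subseteq> E i \<and> F j \<subseteq> F i)"
    proof (intro ballI)
      fix i j assume i: "i \<in> pred t" and j: "j \<in> pred t"
      show "(E i \<subseteq> E j \<and> F i \<subseteq> F j) \<or> (E j \<subseteq> E i \<and> F j \<subseteq> F i)"
      proof (cases "i = j")
        case False
        hence "i \<in> pred j \<or> j \<in> pred i" using tot[OF False] unfolding pred_iff R_def by auto
        thus ?thesis
        proof
          assume "i \<in> pred j"
          hence "E i \<subseteq> Ep j" "F i \<subseteq> Fp j" unfolding Ep_def Fp_def by auto
          thus ?thesis using IH[OF j] by blast
        next
          assume "j \<in> pred i"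
          hence "E j \<subseteq> Ep i" "F j \<subseteq> Fp i" unfolding Ep_def Fp_def by auto
          thus ?thesis using IH[OF i] by blast
        qed
      qed simp
    qed
    have "pre (Ep t) (Fp t)"
    proof -
      have "Q_subspace (Ep t) \<and> Q_subspace (Fp t) \<and> Ep t \<inter> Fp t = {0}"
        unfolding Ep_def Fp_def by (rule chain_sub) (use IH ch in blast)+
      moreover have cp: "countable (pred t)" using cnt pred_def by simp
      moreover have "countable (Ep t)" unfolding Ep_def
        by (intro countable_insert countable_UN cp) (use IH in blast)
      moreover have "countable (Fp t)" unfolding Fp_def
        by (intro countable_insert countable_UN cp) (use IH in blast)
      ultimately show ?thesis unfolding pre_def by blast
    qed
    moreover have "P (Ep t) (Fp t) (G t) t (E t) (F t)"
      using stepP[OF \<open>pre (Ep t) (Fp t)\<close> NG, of t] st_eq2[of t] unfolding E_def F_def by simp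
    ultimately show ?case by blast
  qed
  have goodP: "Q_subspace (E t) \<and> Q_subspace (F t) \<and> countable (E t) \<and> countable (F t) \<and>
     Ep t \<subseteq> E t \<and> Fp t \<subseteq> F t \<and> E t \<noteq> Ep t \<and> F t \<noteq> Fp t \<and> E t \<inter> F t = {0} \<and>
     t \<in> sumset (E t) (F t) \<and> (E t - Ep t) \<inter> G t = {} \<and> (F t - Fp t) \<inter> G t = {}" for t
    using good[of t] unfolding P_def by simp
  have gQ: "Q_subspace (E t)" "Q_subspace (F t)" "E t \<inter> F t = {0}" for t using goodP[of t] by simp_all
  have gsub: "Ep t \<subseteq> E t" "Fp t \<subseteq> F t" for t using goodP[of t] by simp_all
  have gne: "E t \<noteq> Ep t" "F t \<noteq> Fp t" for t using goodP[of t] by simp_all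
  have gsum: "t \<in> sumset (E t) (F t)" for t using goodP[of t] by simp
  have gG: "(E t - Ep t) \<inter> G t = {}" "(F t - Fp t) \<inter> G t = {}" for t using goodP[of t] by simp_all
  have gcnt: "countable (Ep t)" "countable (Fp t)" for t using good[of t] unfolding pre_def by simp_all
  have chU: "\<forall>i\<in>UNIV. \<forall>j\<in>UNIV. (E i \<subseteq> E j \<and> F i \<subseteq> F j) \<or> (E j \<subseteq> E i \<and> F j \<subseteq> F i)"
  proof (intro ballI)
    fix i j :: real
    show "(E i \<subseteq> E j \<and> F i \<subseteq> F j) \<or> (E j \<subseteq> E i \<and> F j \<subseteq> F i)"
    proof (cases "i = j")
      case False
      hence "i \<in> pred j \<or> j \<in> pred i" using tot[OF False] unfolding pred_iff R_def by auto
      thus ?thesis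
      proof
        assume "i \<in> pred j"
        hence "E i \<subseteq> Ep j" "F i \<subseteq> Fp j" unfolding Ep_def Fp_def by auto
        thus ?thesis using gsub[of j] by blast
      next
        assume "j \<in> pred i"
        hence "E j \<subseteq> Ep i" "F j \<subseteq> Fp i" unfolding Ep_def Fp_def by auto
        thus ?thesis using gsub[of i] by blast
      qed
    qed simp
  qed
  define EA where "EA = insert 0 (\<Union>t\<in>UNIV. E t)"
  define FA where "FA = insert 0 (\<Union>t\<in>UNIV. F t)"
  have sub: "Q_subspace EA \<and> Q_subspace FA \<and> EA \<inter> FA = {0}"
    unfolding EA_def FA_def by (rule chain_sub) (use gQ chU in blast)+
  have sum: "sumset EA FA = UNIV"
  proof -
    { fix x
      have "x \<in> sumset (E x) (F x)" using gsum by blast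
      hence "x \<in> sumset EA FA" unfolding sumset_def EA_def FA_def by blast }
    thus ?thesis by blast
  qed
  have unc: "uncountable EA \<and> uncountable FA"
  proof -
    have "\<exists>e. e \<in> E t - Ep t" for t using gsub gne by blast
    then obtain e where e: "\<And>t. e t \<in> E t - Ep t" by metis
    have "\<exists>f. f \<in> F t - Fp t" for t using gsub gne by blast
    then obtain f where f: "\<And>t. f t \<in> F t - Fp t" by metis
    have ie: "inj e" and iff: "inj f"
    proof -
      { fix i j :: real assume "i \<noteq> j" "i \<in> pred j"
        hence "e i \<in> Ep j" "f i \<in> Fp j" using e[of i] f[of i] unfolding Ep_def Fp_def by auto
        hence "e i \<noteq> e j" "f i \<noteq> f j" using e[of j] f[of j] by auto }
      note * = this
      { fix i j :: real assume "i \<noteq> j"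
        hence "i \<in> pred j \<or> j \<in> pred i" using tot unfolding pred_iff R_def by auto
        hence "e i \<noteq> e j \<and> f i \<noteq> f j"
        proof
          assume "i \<in> pred j" thus ?thesis using *[OF \<open>i \<noteq> j\<close>] by blast
        next
          assume "j \<in> pred i" thus ?thesis using *[of j i] \<open>i \<noteq> j\<close> by metis
        qed }
      thus "inj e" "inj f" unfolding inj_def by blast+
    qed
    have "range e \<subseteq> EA" "range f \<subseteq> FA" using e f unfolding EA_def FA_def by auto
    show ?thesis
    proof
      show "uncountable EA"
      proof
        assume "countable EA"
        hence "countable (range e)" using countable_subset[OF \<open>range e \<subseteq> EA\<close>] by blast
        hence "countable (UNIV::real set)" using countable_image_inj_on[OF _ ie] by blast
        thus False using uncountable_UNIV_real by blast
      qed
      show "uncountable FA"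
      proof
        assume "countable FA"
        hence "countable (range f)" using countable_subset[OF \<open>range f \<subseteq> FA\<close>] by blast
        hence "countable (UNIV::real set)" using countable_image_inj_on[OF _ iff] by blast
        thus False using uncountable_UNIV_real by blast
      qed
    qed
  qed
  have rare: "countable (EA \<inter> M) \<and> countable (FA \<inter> M)" if NM: "N M" for M
  proof -
    obtain s where s: "M \<subseteq> Mf s" using cof[OF NM] by blast
    have claim: "\<forall>y. (y \<in> E u \<longrightarrow> y \<in> Mf s \<longrightarrow> y \<in> Ep s) \<and> (y \<in> F u \<longrightarrow> y \<in> Mf s \<longrightarrow> y \<in> Fp s)" for u
      using wfR
    proof (induct u rule: wf_induct_rule)
      case (less u)
      show ?case
      proof (intro allI conjI impI)
        fix y assume y: "y \<in> E u" "y \<in> Mf s"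
        show "y \<in> Ep s"
        proof (cases "y \<in> Ep u")
          case True
          show ?thesis
          proof (cases "y = 0")
            case True thus ?thesis unfolding Ep_def by simp
          next
            case False
            then obtain u' where u': "u' \<in> pred u" "y \<in> E u'" using \<open>y \<in> Ep u\<close> unfolding Ep_def by auto
            hence "(u',u) \<in> R" using pred_iff by blast
            hence "\<forall>y. (y \<in> E u' \<longrightarrow> y \<in> Mf s \<longrightarrow> y \<in> Ep s) \<and> (y \<in> F u' \<longrightarrow> y \<in> Mf s \<longrightarrow> y \<in> Fp s)"
              by (rule less)
            thus ?thesis using u' y by blast
          qed
        next
          case False
          hence yG: "y \<notin> G u" using gG[of u] y by blast
          have "s \<notin> insert u (pred u)"
          proof
            assume "s \<in> insert u (pred u)"
            hence "Mf s \<subseteq> G u" unfolding G_def by blast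
            thus False using yG y by blast
          qed
          hence "s \<noteq> u" "(s,u) \<notin> W" using pred_iff[of s u] unfolding R_def by auto
          hence "(u,s) \<in> W" using tot[of s u] by blast
          hence "u \<in> pred s" using \<open>s \<noteq> u\<close> unfolding pred_iff R_def by auto
          thus ?thesis using y unfolding Ep_def by blast
        qed
      next
        fix y assume y: "y \<in> F u" "y \<in> Mf s"
        show "y \<in> Fp s"
        proof (cases "y \<in> Fp u")
          case True
          show ?thesis
          proof (cases "y = 0")
            case True thus ?thesis unfolding Fp_def by simp
          next
            case False
            then obtain u' where u': "u' \<in> pred u" "y \<in> F u'" using \<open>y \<in> Fp u\<close> unfolding Fp_def by auto
            hence "(u',u) \<in> R" using pred_iff by blast
            hence "\<forall>y. (y \<in> E u' \<longrightarrow> y \<in> Mf s \<longrightarrow> y \<in> Ep s) \<and> (y \<in> F u' \<longrightarrow> y \<in> Mf s \<longrightarrow> y \<in> Fp s)"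
              by (rule less)
            thus ?thesis using u' y by blast
          qed
        next
          case False
          hence yG: "y \<notin> G u" using gG[of u] y by blast
          have "s \<notin> insert u (pred u)"
          proof
            assume "s \<in> insert u (pred u)"
            hence "Mf s \<subseteq> G u" unfolding G_def by blast
            thus False using yG y by blast
          qed
          hence "s \<noteq> u" "(s,u) \<notin> W" using pred_iff[of s u] unfolding R_def by auto
          hence "(u,s) \<in> W" using tot[of s u] by blast
          hence "u \<in> pred s" using \<open>s \<noteq> u\<close> unfolding pred_iff R_def by auto
          thus ?thesis using y unfolding Fp_def by blast
        qed
      qed
    qed
    have "EA \<inter> M \<subseteq> Ep s"
    proof
      fix y assume y: "y \<in> EA \<inter> M"
      show "y \<in> Ep s"
      proof (cases "y = 0")
        case True thus ?thesis unfolding Ep_def by simp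
      next
        case False
        then obtain u where "y \<in> E u" using y unfolding EA_def by blast
        moreover have "y \<in> Mf s" using y s by blast
        ultimately show ?thesis using claim[of u] by blast
      qed
    qed
    moreover have "FA \<inter> M \<subseteq> Fp s"
    proof
      fix y assume y: "y \<in> FA \<inter> M"
      show "y \<in> Fp s"
      proof (cases "y = 0")
        case True thus ?thesis unfolding Fp_def by simp
      next
        case False
        then obtain u where "y \<in> F u" using y unfolding FA_def by blast
        moreover have "y \<in> Mf s" using y s by blast
        ultimately show ?thesis using claim[of u] by blast
      qed
    qed
    moreover have "countable (Ep s)" "countable (Fp s)" using gcnt by blast+
    ultimately show ?thesis using countable_subset by blast
  qed
  have rE: "\<forall>M. N M \<longrightarrow> countable (EA \<inter> M)" using rare by simp
  have rF: "\<forall>M. N M \<longrightarrow> countable (FA \<inter> M)" using rare by simp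
  show ?thesis
    apply (rule exI[of _ EA], rule exI[of _ FA])
    using sub sum unc rE rF by simp
qed



lemma wo_exists:
  assumes "CH"
  shows "\<exists>W. well_order_on (UNIV::real set) W \<and> (\<forall>t. countable (underS W t))"
proof (intro exI conjI allI)
  let ?W = "card_of (UNIV::real set)"
  show wo: "well_order_on UNIV ?W" using card_of_card_order_on[of "UNIV::real set"]
    unfolding card_order_on_def by blast
  fix t
  show "countable (underS ?W t)"
  proof (rule ccontr)
    assume "uncountable (underS ?W t)"
    hence "underS ?W t \<approx> (UNIV::real set)" using assms unfolding CH_def by blast
    hence iso: "ordIso2 (card_of (underS ?W t)) ?W" using eqpoll_iff_card_of_ordIso by blast
    have "(card_of (underS ?W t), ?W) \<in> ordLess"
      by (rule card_of_underS[OF card_of_Card_order]) (simp add: Field_card_of)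
    thus False using iso not_ordLess_ordIso by blast
  qed
qed

lemma singular_image:
  assumes li: "linearly_invariant C" and c: "c \<noteq> 0" and S: "singular C S"
  shows "singular C ((\<lambda>y. c*y + d) ` S)"
  unfolding singular_def
proof (intro allI impI)
  fix A assume A: "region C A"
  define A' where "A' = (\<lambda>x. (1/c) * x) ` ((\<lambda>x. x + (-d)) ` A)"
  have "(\<lambda>x. x + (-d)) ` A \<in> C" using A li unfolding region_def linearly_invariant_def by blast
  moreover have "1/c \<noteq> 0" using c by simp
  ultimately have "A' \<in> C" using li unfolding linearly_invariant_def A'_def by blast
  hence "region C A'" using A unfolding region_def A'_def by simp
  then obtain B where B: "region C B" "B \<subseteq> A'" "B \<inter> S = {}" using S unfolding singular_def by blast
  define B' where "B' = (\<lambda>x. x + d) ` ((\<lambda>x. c * x) ` B)"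
  have B'eq: "B' = (\<lambda>y. c*y + d) ` B" unfolding B'_def by (simp add: image_image)
  have "(\<lambda>x. c * x) ` B \<in> C" using B li c unfolding region_def linearly_invariant_def by blast
  hence "B' \<in> C" using li unfolding linearly_invariant_def B'_def by blast
  hence "region C B'" using B unfolding region_def B'_def by simp
  moreover have "B' \<subseteq> A"
  proof
    fix z assume "z \<in> B'"
    then obtain y where y: "y \<in> B" "z = c*y + d" unfolding B'_def by auto
    then obtain a where "a \<in> A" "y = (1/c) * (a + (-d))" using B unfolding A'_def by auto
    hence "z = a" using y c by (simp add: field_simps)
    thus "z \<in> A" using \<open>a \<in> A\<close> by simp
  qed
  moreover have "B' \<inter> (\<lambda>y. c*y + d) ` S = {}"
  proof -
    { fix z assume "z \<in> B'" "z \<in> (\<lambda>y. c*y + d) ` S"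
      then obtain y w where "y \<in> B" "z = c*y + d" "w \<in> S" "z = c*w + d" unfolding B'eq by blast
      hence "y = w" using c by simp
      hence False using B \<open>y \<in> B\<close> \<open>w \<in> S\<close> by blast }
    thus ?thesis by blast
  qed
  ultimately show "\<exists>B. region C B \<and> B \<subseteq> A \<and> B \<inter> (\<lambda>y. c*y + d) ` S = {}" by blast
qed

lemma meager_image:
  assumes li: "linearly_invariant C" and c: "c \<noteq> 0" and M: "meager C M"
  shows "meager C ((\<lambda>y. c*y + d) ` M)"
proof -
  obtain F where F: "countable F" "\<forall>S\<in>F. singular C S" "M = \<Union>F" using M unfolding meager_def by blast
  have "(\<lambda>y. c*y + d) ` M = \<Union>((\<lambda>S. (\<lambda>y. c*y + d) ` S) ` F)" using F by auto
  moreover have "countable ((\<lambda>S. (\<lambda>y. c*y + d) ` S) ` F)" using F by simp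
  moreover have "\<forall>S\<in>((\<lambda>S. (\<lambda>y. c*y + d) ` S) ` F). singular C S" using F singular_image[OF li c] by blast
  ultimately show ?thesis unfolding meager_def by blast
qed

lemma meager_aff:
  assumes li: "linearly_invariant C" and M: "meager C M" and c: "c \<noteq> 0"
  shows "meager C {a. c*a + d \<in> M}"
proof -
  have "{a. c*a + d \<in> M} = (\<lambda>y. (1/c)*y + (-d/c)) ` M"
  proof (intro equalityI subsetI)
    fix a assume "a \<in> {a. c*a + d \<in> M}"
    moreover have "a = (1/c)*(c*a+d) + (-d/c)" using c by (simp add: field_simps)
    ultimately show "a \<in> (\<lambda>y. (1/c)*y + (-d/c)) ` M" by blast
  next
    fix a assume "a \<in> (\<lambda>y. (1/c)*y + (-d/c)) ` M"
    then obtain m where "m \<in> M" "a = (1/c)*m + (-d/c)" by blast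
    moreover hence "c*a + d = m" using c by (simp add: field_simps)
    ultimately show "a \<in> {a. c*a + d \<in> M}" by simp
  qed
  thus ?thesis using meager_image[OF li _ M, of "1/c" "-d/c"] c by simp
qed

lemma meager_Un:
  assumes "countable FF" "\<forall>S\<in>FF. meager C S"
  shows "meager C (\<Union>FF)"
proof -
  have "\<forall>S\<in>FF. \<exists>F. countable F \<and> (\<forall>T\<in>F. singular C T) \<and> S = \<Union>F"
    using assms unfolding meager_def by blast
  then obtain g where g: "\<forall>S\<in>FF. countable (g S) \<and> (\<forall>T\<in>g S. singular C T) \<and> S = \<Union>(g S)"
    by metis
  have eq: "\<And>S. S \<in> FF \<Longrightarrow> S = \<Union>(g S)" using g by blast
  have "\<Union>FF = \<Union>(\<Union>S\<in>FF. g S)"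
  proof (intro equalityI subsetI)
    fix x assume "x \<in> \<Union>FF"
    then obtain S where "S \<in> FF" "x \<in> S" by blast
    hence "x \<in> \<Union>(g S)" using eq by blast
    thus "x \<in> \<Union>(\<Union>S\<in>FF. g S)" using \<open>S \<in> FF\<close> by blast
  next
    fix x assume "x \<in> \<Union>(\<Union>S\<in>FF. g S)"
    then obtain S where "S \<in> FF" "x \<in> \<Union>(g S)" by blast
    hence "x \<in> S" using eq by blast
    thus "x \<in> \<Union>FF" using \<open>S \<in> FF\<close> by blast
  qed
  moreover have "countable (\<Union>S\<in>FF. g S)" using g assms(1) by (intro countable_UN) auto
  moreover have "\<forall>T\<in>(\<Union>S\<in>FF. g S). singular C T" using g by blast
  ultimately show ?thesis unfolding meager_def by blast
qed

lemma meager_countable: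
  assumes pm: "point_meager UNIV C" and A: "countable A"
  shows "meager C A"
proof -
  have "A = \<Union>((\<lambda>x. {x}) ` A)" by auto
  moreover have "meager C (\<Union>((\<lambda>x. {x}) ` A))"
    by (rule meager_Un) (use A pm in \<open>auto simp: point_meager_def\<close>)
  ultimately show ?thesis by simp
qed



lemma singular_cover:
  assumes cb: "category_base (UNIV::real set) C" and ccc: "ccc C" and S: "singular C S"
  shows "\<exists>D. countable D \<and> D \<noteq> {} \<and> D \<subseteq> C \<and> S \<inter> \<Union>D = {} \<and> singular C (UNIV - \<Union>D)"
proof -
  have "(UNIV::real set) = \<Union>C" using cb unfolding category_base_def by (elim conjE)
  hence "(0::real) \<in> \<Union>C" by blast
  then obtain A0 where "A0 \<in> C" "0 \<in> A0" by blast
  hence A0: "region C A0" unfolding region_def by blast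
  then obtain B0 where B0: "region C B0" "B0 \<subseteq> A0" "B0 \<inter> S = {}" using S unfolding singular_def by blast
  show ?thesis
  proof (cases "countable C")
    case True
    define D where "D = {B. region C B \<and> B \<inter> S = {}}"
    have "D \<subseteq> C" unfolding D_def region_def by blast
    moreover hence "countable D" using True countable_subset by blast
    moreover have "D \<noteq> {}" using B0 unfolding D_def by blast
    moreover have "S \<inter> \<Union>D = {}" unfolding D_def by blast
    moreover have "singular C (UNIV - \<Union>D)"
      unfolding singular_def
    proof (intro allI impI)
      fix A assume "region C A"
      then obtain B where "region C B" "B \<subseteq> A" "B \<inter> S = {}" using S unfolding singular_def by blast
      moreover hence "B \<in> D" unfolding D_def by blast
      ultimately show "\<exists>B. region C B \<and> B \<subseteq> A \<and> B \<inter> (UNIV - \<Union>D) = {}" by blast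
    qed
    ultimately show ?thesis by blast
  next
    case False
    define AA where "AA = {D. D \<subseteq> {B. region C B \<and> B \<inter> S = {}} \<and> pairwise disjnt D}"
    have "\<forall>Ch\<in>chains AA. \<Union>Ch \<in> AA"
    proof
      fix Ch assume Ch: "Ch \<in> chains AA"
      have sub: "Ch \<subseteq> AA" using Ch unfolding chains_def by simp
      have ch: "\<And>X Y. X \<in> Ch \<Longrightarrow> Y \<in> Ch \<Longrightarrow> X \<subseteq> Y \<or> Y \<subseteq> X"
        using Ch unfolding chains_def chain_subset_def by simp
      have "pairwise disjnt (\<Union>Ch)"
        unfolding pairwise_def
      proof (intro ballI impI)
        fix x y assume x: "x \<in> \<Union>Ch" and y: "y \<in> \<Union>Ch" and xy: "x \<noteq> y"
        then obtain X Y where XY: "X \<in> Ch" "Y \<in> Ch" "x \<in> X" "y \<in> Y" by blast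
        have "X \<subseteq> Y \<or> Y \<subseteq> X" using ch XY(1,2) by blast
        hence "\<exists>Z\<in>Ch. x \<in> Z \<and> y \<in> Z"
        proof
          assume "X \<subseteq> Y" thus ?thesis using XY by blast
        next
          assume "Y \<subseteq> X" thus ?thesis using XY by blast
        qed
        then obtain Z where "Z \<in> Ch" "x \<in> Z" "y \<in> Z" by blast
        moreover have "pairwise disjnt Z" using \<open>Z \<in> Ch\<close> sub unfolding AA_def by blast
        ultimately show "disjnt x y" using xy unfolding pairwise_def by blast
      qed
      moreover have "\<Union>Ch \<subseteq> {B. region C B \<and> B \<inter> S = {}}" using sub unfolding AA_def by blast
      ultimately show "\<Union>Ch \<in> AA" unfolding AA_def by blast
    qed
    from Zorn_Lemma[OF this] obtain D where DA: "D \<in> AA" and Dmax0: "\<forall>X\<in>AA. D \<subseteq> X \<longrightarrow> X = D"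
      by blast
    have Dmax: "\<And>X. X \<in> AA \<Longrightarrow> D \<subseteq> X \<Longrightarrow> X = D" using Dmax0 by blast
    have Dreg: "\<forall>B\<in>D. region C B" and DS: "\<forall>B\<in>D. B \<inter> S = {}" and Dpw: "pairwise disjnt D"
      using DA unfolding AA_def by blast+
    have cD: "countable D" using ccc Dreg Dpw unfolding ccc_def by blast
    have DC: "D \<subseteq> C" using Dreg unfolding region_def by blast
    have ins: "B \<in> D" if "region C B" "B \<inter> S = {}" "\<forall>E\<in>D. B \<inter> E = {}" for B
    proof -
      have "pairwise disjnt (insert B D)"
        using Dpw that unfolding pairwise_insert disjnt_def by blast
      hence "insert B D \<in> AA" using DA that unfolding AA_def by blast
      hence "insert B D = D" using Dmax by blast
      thus ?thesis by blast
    qed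
    have Dne: "D \<noteq> {}"
    proof
      assume "D = {}"
      hence "B0 \<in> D" using ins B0 by blast
      with \<open>D = {}\<close> show False by blast
    qed
    have Dless: "D \<prec> C"
      unfolding lesspoll_def
    proof
      show "D \<lesssim> C" using DC by (rule subset_imp_lepoll)
      show "\<not> D \<approx> C"
      proof
        assume "D \<approx> C"
        hence "C \<lesssim> D" using eqpoll_sym eqpoll_imp_lepoll by blast
        hence "countable C" using cD countable_lepoll by blast
        with False show False by blast
      qed
    qed
    have cbax: "\<And>A. region C A \<Longrightarrow>
        ((\<exists>B. region C B \<and> B \<subseteq> A \<inter> \<Union>D) \<longrightarrow> (\<exists>E\<in>D. \<exists>B. region C B \<and> B \<subseteq> A \<inter> E)) \<and>
        (\<not>(\<exists>B. region C B \<and> B \<subseteq> A \<inter> \<Union>D) \<longrightarrow> (\<exists>B. region C B \<and> B \<subseteq> A \<and> (\<forall>E\<in>D. B \<inter> E = {})))"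
    proof -
      fix A assume A: "region C A"
      have ax: "\<forall>A D. region C A \<and> D \<noteq> {} \<and> (\<forall>B\<in>D. region C B) \<and> pairwise disjnt D \<and> D \<prec> C \<longrightarrow>
        ((\<exists>B. region C B \<and> B \<subseteq> A \<inter> \<Union>D) \<longrightarrow> (\<exists>E\<in>D. \<exists>B. region C B \<and> B \<subseteq> A \<inter> E)) \<and>
        (\<not>(\<exists>B. region C B \<and> B \<subseteq> A \<inter> \<Union>D) \<longrightarrow> (\<exists>B. region C B \<and> B \<subseteq> A \<and> (\<forall>E\<in>D. B \<inter> E = {})))"
        using cb unfolding category_base_def by (elim conjE)
      show "((\<exists>B. region C B \<and> B \<subseteq> A \<inter> \<Union>D) \<longrightarrow> (\<exists>E\<in>D. \<exists>B. region C B \<and> B \<subseteq> A \<inter> E)) \<and>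
        (\<not>(\<exists>B. region C B \<and> B \<subseteq> A \<inter> \<Union>D) \<longrightarrow> (\<exists>B. region C B \<and> B \<subseteq> A \<and> (\<forall>E\<in>D. B \<inter> E = {})))"
        using ax[rule_format, of A D] A Dne Dreg Dpw Dless by blast
    qed
    have "singular C (UNIV - \<Union>D)"
      unfolding singular_def
    proof (intro allI impI)
      fix A assume A: "region C A"
      show "\<exists>B. region C B \<and> B \<subseteq> A \<and> B \<inter> (UNIV - \<Union>D) = {}"
      proof (cases "\<exists>B. region C B \<and> B \<subseteq> A \<inter> \<Union>D")
        case True
        then obtain E B where "E \<in> D" "region C B" "B \<subseteq> A \<inter> E" using cbax[OF A] by blast
        thus ?thesis by blast
      next
        case False
        then obtain B where B: "region C B" "B \<subseteq> A" "\<forall>E\<in>D. B \<inter> E = {}" using cbax[OF A] by blast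
        then obtain B' where B': "region C B'" "B' \<subseteq> B" "B' \<inter> S = {}" using S unfolding singular_def by blast
        have "\<forall>E\<in>D. B' \<inter> E = {}" using B B' by blast
        hence "B' \<in> D" using ins B' by blast
        hence "B' \<inter> B' = {}" using \<open>\<forall>E\<in>D. B' \<inter> E = {}\<close> by blast
        hence False using B' unfolding region_def by blast
        thus ?thesis by blast
      qed
    qed
    thus ?thesis using cD Dne DC DS by blast
  qed
qed



lemma singular_empty: "singular C {}"
  unfolding singular_def by blast

lemma meager_empty: "meager C {}"
  unfolding meager_def by (intro exI[of _ "{}"]) simp

lemma meager_cover:
  assumes cb: "category_base (UNIV::real set) C" and ccc: "ccc C" and inj: "inj_on c C"
    and M: "meager C M"
  shows "\<exists>H::nat\<Rightarrow>nat\<Rightarrow>real. M \<subseteq> (\<Union>n. UNIV - \<Union>(range (\<lambda>k. inv_into C c (H n k))))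
           \<and> meager C (\<Union>n. UNIV - \<Union>(range (\<lambda>k. inv_into C c (H n k))))"
proof -
  obtain F where F: "countable F" "\<forall>S\<in>F. singular C S" "M = \<Union>F" using M unfolding meager_def by blast
  define F' where "F' = insert {} F"
  have F'ne: "F' \<noteq> {}" and cF': "countable F'" using F unfolding F'_def by auto
  define S where "S = from_nat_into F'"
  have rS: "range S = F'" unfolding S_def using F'ne cF' by simp
  have sS: "singular C (S n)" for n
  proof -
    have "S n \<in> F'" using rS by blast
    hence "S n = {} \<or> S n \<in> F" unfolding F'_def by simp
    thus ?thesis using F(2) singular_empty[of C] by auto
  qed
  define Q where "Q n h \<longleftrightarrow> S n \<inter> \<Union>(range (\<lambda>k. inv_into C c (h k))) = {} \<and>
           singular C (UNIV - \<Union>(range (\<lambda>k. inv_into C c (h k))))" for n and h :: "nat \<Rightarrow> real"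
  have ex: "\<exists>h. Q n h" for n
  proof -
    obtain D where D: "countable D" "D \<noteq> {}" "D \<subseteq> C" "S n \<inter> \<Union>D = {}" "singular C (UNIV - \<Union>D)"
      using singular_cover[OF cb ccc sS[of n]] by blast
    define g where "g = from_nat_into D"
    have rg: "range g = D" unfolding g_def using D by simp
    have "inv_into C c (c (g k)) = g k" for k
      using inj D rg by (intro inv_into_f_f) auto
    hence "range (\<lambda>k. inv_into C c (c (g k))) = D" using rg by simp
    hence "Q n (\<lambda>k. c (g k))" unfolding Q_def using D by simp
    thus ?thesis by blast
  qed
  have "\<forall>n. \<exists>h. Q n h" using ex by blast
  from choice[OF this] obtain H where H0: "\<forall>n. Q n (H n)" by blast
  have H: "S n \<inter> \<Union>(range (\<lambda>k. inv_into C c (H n k))) = {} \<and>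
           singular C (UNIV - \<Union>(range (\<lambda>k. inv_into C c (H n k))))" for n
    using H0 unfolding Q_def by blast
  have "M \<subseteq> (\<Union>n. UNIV - \<Union>(range (\<lambda>k. inv_into C c (H n k))))"
  proof
    fix x assume "x \<in> M"
    then obtain T where "T \<in> F" "x \<in> T" using F by blast
    hence "T \<in> range S" using rS unfolding F'_def by blast
    then obtain n where "T = S n" by blast
    hence "x \<notin> \<Union>(range (\<lambda>k. inv_into C c (H n k)))" using H[of n] \<open>x \<in> T\<close> by blast
    thus "x \<in> (\<Union>n. UNIV - \<Union>(range (\<lambda>k. inv_into C c (H n k))))" by blast
  qed
  moreover have "meager C (\<Union>n. UNIV - \<Union>(range (\<lambda>k. inv_into C c (H n k))))"
    unfolding meager_def
  proof (intro exI conjI)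
    show "countable (range (\<lambda>n. UNIV - \<Union>(range (\<lambda>k. inv_into C c (H n k)))))" by simp
    show "\<forall>S\<in>range (\<lambda>n. UNIV - \<Union>(range (\<lambda>k. inv_into C c (H n k)))). singular C S" using H by blast
  qed (rule refl)
  ultimately show ?thesis by blast
qed

lemma seq_inj: "\<exists>\<iota>::(nat\<Rightarrow>nat\<Rightarrow>real)\<Rightarrow>real. inj \<iota>"
proof -
  obtain b :: "nat set \<Rightarrow> real" where b: "bij_betw b UNIV UNIV"
    using nat_sets_eqpoll_reals unfolding eqpoll_def by blast
  obtain b' :: "real \<Rightarrow> nat set" where b': "bij_betw b' UNIV UNIV"
    using eqpoll_sym[OF nat_sets_eqpoll_reals] unfolding eqpoll_def by blast
  define \<Phi> where "\<Phi> h = {prod_encode (prod_encode (i,j), k) | i j k. k \<in> b' (h i j)}" for h :: "nat\<Rightarrow>nat\<Rightarrow>real"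
  have mem: "prod_encode (prod_encode (i,j), k) \<in> \<Phi> h \<longleftrightarrow> k \<in> b' (h i j)" for h i j k
    unfolding \<Phi>_def by auto
  have "inj (\<lambda>h. b (\<Phi> h))"
  proof (rule injI)
    fix h1 h2 assume "b (\<Phi> h1) = b (\<Phi> h2)"
    hence eq: "\<Phi> h1 = \<Phi> h2" using b unfolding bij_betw_def inj_on_def by blast
    show "h1 = h2"
    proof (intro ext)
      fix i j
      have "b' (h1 i j) = b' (h2 i j)"
      proof (intro set_eqI)
        fix k show "k \<in> b' (h1 i j) \<longleftrightarrow> k \<in> b' (h2 i j)"
          using mem[of i j k h1] mem[of i j k h2] eq by simp
      qed
      thus "h1 i j = h2 i j" using b' unfolding bij_betw_def inj_on_def by blast
    qed
  qed
  thus ?thesis by blast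
qed


theorem theorem2p5:
  fixes C :: "real set set"
  assumes "CH"
    and "category_base (UNIV :: real set) C"
    and "point_meager UNIV C"
    and "ccc C"
    and "linearly_invariant C"
    and "C \<lesssim> (UNIV :: real set)"
    and "abundant C (UNIV :: real set)"
  shows "\<exists>E F :: real set.
           rare_set UNIV C E \<and> rare_set UNIV C F \<and>
           Q_subspace E \<and> Q_subspace F \<and>
           {e + f | e f. e \<in> E \<and> f \<in> F} = UNIV \<and> E \<inter> F = {0}"
proof -
  obtain W :: "real rel" where W: "well_order_on UNIV W" "\<And>t. countable (underS W t)"
    using wo_exists[OF assms(1)] by blast
  obtain c :: "real set \<Rightarrow> real" where c: "inj_on c C" using assms(6) unfolding lepoll_def by blast
  obtain \<iota> :: "(nat\<Rightarrow>nat\<Rightarrow>real)\<Rightarrow>real" where \<iota>: "inj \<iota>" using seq_inj by blast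
  define cand where "cand H = (\<Union>n. UNIV - \<Union>(range (\<lambda>k. inv_into C c (H n k))))" for H :: "nat\<Rightarrow>nat\<Rightarrow>real"
  define Mf where "Mf t = (if meager C (cand (inv \<iota> t)) then cand (inv \<iota> t) else {})" for t
  have NMf: "meager C (Mf t)" for t unfolding Mf_def using meager_empty[of C] by simp
  have cof: "\<exists>t. M \<subseteq> Mf t" if M: "meager C M" for M
  proof -
    have "\<exists>H. M \<subseteq> cand H \<and> meager C (cand H)"
      unfolding cand_def by (rule meager_cover[OF assms(2) assms(4) c M])
    then obtain H where H: "M \<subseteq> cand H" "meager C (cand H)" by blast
    have "Mf (\<iota> H) = cand H" unfolding Mf_def using H \<iota> by (simp add: inv_f_f)
    thus ?thesis using H(1) by (intro exI[of _ "\<iota> H"]) simp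
  qed
  have N_UNIV: "\<not> meager C UNIV" using assms(7) unfolding abundant_def by blast
  obtain E F where EF: "uncountable E" "uncountable F" "\<forall>M. meager C M \<longrightarrow> countable (E \<inter> M)"
     "\<forall>M. meager C M \<longrightarrow> countable (F \<inter> M)" "Q_subspace E" "Q_subspace F"
     "sumset E F = UNIV" "E \<inter> F = {0}"
  proof -
    have ex: "\<exists>E F. uncountable E \<and> uncountable F \<and> (\<forall>M. meager C M \<longrightarrow> countable (E \<inter> M)) \<and>
     (\<forall>M. meager C M \<longrightarrow> countable (F \<inter> M)) \<and> Q_subspace E \<and> Q_subspace F \<and>
     sumset E F = UNIV \<and> E \<inter> F = {0}"
      by (rule construct[of "meager C", OF meager_Un meager_countable[OF assms(3)] meager_aff[OF assms(5)] N_UNIV W NMf cof])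
    show ?thesis using ex by (elim exE conjE) (rule that)
  qed
  have "rare_set UNIV C E" "rare_set UNIV C F" unfolding rare_set_def using EF by blast+
  moreover have "{e + f | e f. e \<in> E \<and> f \<in> F} = UNIV" using EF(7) unfolding sumset_def .
  ultimately have X: "rare_set UNIV C E \<and> rare_set UNIV C F \<and> Q_subspace E \<and> Q_subspace F \<and>
           {e + f | e f. e \<in> E \<and> f \<in> F} = UNIV \<and> E \<inter> F = {0}"
    using EF(5,6,8) by simp
  show ?thesis
    by (rule exI[of _ E], rule exI[of _ F], rule X)
qed

end
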